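(* Let $E$ be a nonzero real Banach space, $f_0\colon E\times E^*\to\,]{-}\infty,\infty]$ proper, convex and lower semicontinuous, $z^{**}\in E^{**}$ with $f_0^{**}(z^{**},0)\le0$, and $z^*\in E^*$. Then for all $n\in\mathbb N$ there exists $(x_n,x_n^* )\in E\times E^*$ such that $f_0(x_n,x_n^* )\le1/n^2$, $\|x_n\|\le\|z^{**}\|+1/n^2$, $\|x_n^*\|\le1/n^2$ and $|\langle x_n,z^*\rangle-\langle z^*,z^{**}\rangle|\le1/n^2$.
   Context: $(E\times E^* )^*$ is identified with $E^*\times E^{**}$ via $\langle (x,x^* ),(y^*,y^{**})\rangle=\langle x,y^*\rangle+\langle x^*,y^{**}\rangle$, so $(E\times E^* )^{**}$ is identified with $E^{**}\times E^{***}$; $f_0^*$ is the Fenchel conjugate on $E^*\times E^{**}$ and $f_0^{**}(x^{**},x^{***})=\sup_{(y^*,y^{**})}[\langle y^*,x^{**}\rangle+\langle y^{**},x^{***}\rangle-f_0^*(y^*,y^{**})]$. *)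

theory Defs
  imports "HOL-Analysis.Analysis"
begin

definition proper_fun :: "('a \<Rightarrow> ereal) \<Rightarrow> bool" where
  "proper_fun f \<longleftrightarrow> (\<forall>x. f x \<noteq> -\<infinity>) \<and> (\<exists>x. f x \<noteq> \<infinity>)"

definition convex_fun :: "('a::real_vector \<Rightarrow> ereal) \<Rightarrow> bool" where
  "convex_fun f \<longleftrightarrow> (\<forall>x y t. 0 \<le> t \<and> t \<le> 1 \<longrightarrow>
      f ((1 - t) *\<^sub>R x + t *\<^sub>R y) \<le> ereal (1 - t) * f x + ereal t * f y)"

definition lsc_fun :: "('a::topological_space \<Rightarrow> ereal) \<Rightarrow> bool" where
  "lsc_fun f \<longleftrightarrow> (\<forall>c::real. closed {x. f x \<le> ereal c})"

definition fenchel_conj ::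
  "('a::real_normed_vector \<times> 'b::real_normed_vector \<Rightarrow> ereal)
     \<Rightarrow> ('a \<Rightarrow>\<^sub>L real) \<times> ('b \<Rightarrow>\<^sub>L real) \<Rightarrow> ereal" where
  "fenchel_conj f = (\<lambda>(a, b). SUP p \<in> UNIV. ereal (a (fst p) + b (snd p)) - f p)"

end

theory Submission
  imports Defs
begin

definition sublin :: "('v::real_vector \<Rightarrow> real) \<Rightarrow> bool" where
  "sublin q \<longleftrightarrow> (\<forall>x y. q (x + y) \<le> q x + q y) \<and> (\<forall>c x. c > 0 \<longrightarrow> q (c *\<^sub>R x) = c * q x)"

definition pext :: "('v::real_vector \<Rightarrow> real) \<Rightarrow> 'v set \<Rightarrow> ('v \<Rightarrow> real) \<Rightarrow> bool" where
  "pext q S f \<longleftrightarrow> 0 \<in> S \<and> (\<forall>x\<in>S. \<forall>y\<in>S. x + y \<in> S \<and> f (x + y) = f x + f y)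
     \<and> (\<forall>x\<in>S. \<forall>c. c *\<^sub>R x \<in> S \<and> f (c *\<^sub>R x) = c * f x) \<and> (\<forall>x\<in>S. f x \<le> q x)"

definition graph :: "'v set \<Rightarrow> ('v \<Rightarrow> real) \<Rightarrow> ('v \<times> real) set" where
  "graph S f = (\<lambda>x. (x, f x)) ` S"

lemma chain_common:
  assumes "C \<in> chains A" "a \<in> \<Union>C" "b \<in> \<Union>C"
  shows "\<exists>G\<in>C. a \<in> G \<and> b \<in> G"
proof -
  obtain G1 G2 where "G1 \<in> C" "G2 \<in> C" "a \<in> G1" "b \<in> G2" using assms by auto
  moreover have "G1 \<subseteq> G2 \<or> G2 \<subseteq> G1" using assms(1) \<open>G1 \<in> C\<close> \<open>G2 \<in> C\<close>
    unfolding chains_def chain_subset_def by blast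
  ultimately show ?thesis by blast
qed

lemma chain_union:
  fixes q :: "'v::real_vector \<Rightarrow> real"
  defines "A \<equiv> {graph S f |S f. pext q S f}"
  assumes C: "C \<in> chains A" "C \<noteq> {}"
  shows "\<Union>C \<in> A"
proof -
  have CA: "\<And>G. G \<in> C \<Longrightarrow> \<exists>S f. G = graph S f \<and> pext q S f"
    using C(1) unfolding chains_def A_def by blast
  have uniq: "y1 = y2" if h12: "(x, y1) \<in> \<Union>C" "(x, y2) \<in> \<Union>C" for x y1 y2
  proof -
    obtain G where "G \<in> C" "(x, y1) \<in> G" "(x, y2) \<in> G" using chain_common[OF C(1) h12] by blast
    then obtain S f where "G = graph S f" using CA by blast
    then show ?thesis using \<open>(x, y1) \<in> G\<close> \<open>(x, y2) \<in> G\<close> unfolding graph_def by auto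
  qed
  define S where "S = fst ` \<Union>C"
  define f where "f x = (THE y. (x, y) \<in> \<Union>C)" for x
  have fx: "f x = y" if "(x, y) \<in> \<Union>C" for x y
    unfolding f_def using uniq that by blast
  have inS: "(x, f x) \<in> \<Union>C" if "x \<in> S" for x
  proof -
    obtain y where "(x, y) \<in> \<Union>C" using \<open>x \<in> S\<close> unfolding S_def by (auto simp: image_iff) blast
    then show ?thesis using fx by auto
  qed
  have eq: "\<Union>C = graph S f"
  proof
    show "\<Union>C \<subseteq> graph S f"
    proof
      fix p assume p: "p \<in> \<Union>C"
      obtain x y where pxy: "p = (x, y)" by (cases p)
      have "x \<in> S" unfolding S_def using p pxy by (simp add: image_iff) (metis fst_conv)
      moreover have "y = f x" using fx p pxy by simp
      ultimately show "p \<in> graph S f" unfolding graph_def using pxy by simp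
    qed
    show "graph S f \<subseteq> \<Union>C" using inS unfolding graph_def by auto
  qed
  have loc: "\<exists>G\<in>C. \<exists>S' g. G = graph S' g \<and> pext q S' g \<and> x \<in> S' \<and> y \<in> S' \<and> f x = g x \<and> f y = g y
       \<and> (\<forall>z\<in>S'. (z, g z) \<in> \<Union>C)"
    if hxy: "x \<in> S" "y \<in> S" for x y
  proof -
    obtain G where G: "G \<in> C" "(x, f x) \<in> G" "(y, f y) \<in> G"
      using chain_common[OF C(1) inS[OF hxy(1)] inS[OF hxy(2)]] by blast
    then obtain S' g where Sg: "G = graph S' g" "pext q S' g" using CA by blast
    then show ?thesis using G unfolding graph_def by (intro bexI[OF _ G(1)]) blast
  qed
  have "pext q S f"
    unfolding pext_def
  proof (intro conjI ballI allI)
    obtain G where "G \<in> C" using C(2) by blast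
    then obtain S' g where "G = graph S' g" "pext q S' g" using CA by blast
    then have "(0, g 0) \<in> \<Union>C" using \<open>G \<in> C\<close> unfolding graph_def pext_def by blast
    then show "0 \<in> S" unfolding S_def by (simp add: image_iff) (metis fst_conv)
  next
    fix x y assume "x \<in> S" "y \<in> S"
    from loc[OF this] obtain G S' g where H: "G \<in> C" "G = graph S' g" "pext q S' g" "x \<in> S'" "y \<in> S'"
      "f x = g x" "f y = g y" "\<forall>z\<in>S'. (z, g z) \<in> \<Union>C" by blast
    then have "x + y \<in> S'" "g (x + y) = g x + g y" unfolding pext_def by auto
    moreover have "(x + y, g (x + y)) \<in> \<Union>C" using H(8) \<open>x + y \<in> S'\<close> by blast
    ultimately show "x + y \<in> S" "f (x + y) = f x + f y"
      using H(6,7) fx unfolding S_def by (simp_all add: image_iff) (metis fst_conv)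
  next
    fix x c assume "x \<in> S"
    from loc[OF this this] obtain G S' g where H: "G \<in> C" "G = graph S' g" "pext q S' g" "x \<in> S'"
      "f x = g x" "\<forall>z\<in>S'. (z, g z) \<in> \<Union>C" by blast
    then have "c *\<^sub>R x \<in> S'" "g (c *\<^sub>R x) = c * g x" unfolding pext_def by auto
    moreover have "(c *\<^sub>R x, g (c *\<^sub>R x)) \<in> \<Union>C" using H(6) \<open>c *\<^sub>R x \<in> S'\<close> by blast
    ultimately show "c *\<^sub>R x \<in> S" "f (c *\<^sub>R x) = c * f x"
      using H(5) fx unfolding S_def by (simp_all add: image_iff) (metis fst_conv)
  next
    fix x assume "x \<in> S"
    from loc[OF this this] obtain G S' g where H: "G \<in> C" "G = graph S' g" "pext q S' g" "x \<in> S'"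
      "f x = g x" by blast
    then show "f x \<le> q x" unfolding pext_def by auto
  qed
  then show ?thesis using eq unfolding A_def by blast
qed

lemma sublin_0: "sublin q \<Longrightarrow> q 0 = 0"
  unfolding sublin_def by (metis (no_types) mult_2 scaleR_zero_right zero_less_numeral add_cancel_right_left)

lemma pext_minus: "pext q S f \<Longrightarrow> x \<in> S \<Longrightarrow> y \<in> S \<Longrightarrow> x - y \<in> S"
  unfolding pext_def by (metis add_uminus_conv_diff scaleR_minus1_left)

lemma one_step:
  fixes q :: "'v::real_vector \<Rightarrow> real"
  assumes q: "sublin q" and P: "pext q S f" and v: "v \<notin> S"
  shows "\<exists>S' g. pext q S' g \<and> graph S f \<subset> graph S' g"
proof -
  have add: "\<And>x y. q (x + y) \<le> q x + q y" and hom: "\<And>c x. c > 0 \<Longrightarrow> q (c *\<^sub>R x) = c * q x"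
    using q unfolding sublin_def by auto
  have Sadd: "\<And>x y. x \<in> S \<Longrightarrow> y \<in> S \<Longrightarrow> x + y \<in> S \<and> f (x + y) = f x + f y"
    and Ssc: "\<And>x c. x \<in> S \<Longrightarrow> c *\<^sub>R x \<in> S \<and> f (c *\<^sub>R x) = c * f x"
    and Sq: "\<And>x. x \<in> S \<Longrightarrow> f x \<le> q x" and S0: "0 \<in> S"
    using P unfolding pext_def by auto
  define X where "X = (\<lambda>s. f s - q (s - v)) ` S"
  define c where "c = Sup X"
  have key: "f a - q (a - v) \<le> q (b + v) - f b" if "a \<in> S" "b \<in> S" for a b
  proof -
    have "f a + f b = f (a + b)" using Sadd that by simp
    also have "\<dots> \<le> q (a + b)" using Sq[of "a+b"] Sadd[OF that] by blast
    also have "a + b = (a - v) + (b + v)" by simp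
    also have "q \<dots> \<le> q (a - v) + q (b + v)" by (rule add)
    finally show ?thesis by simp
  qed
  have Xne: "X \<noteq> {}" using S0 unfolding X_def by auto
  have bdd: "bdd_above X" unfolding X_def bdd_above_def using key[OF _ S0] by auto
  have c_lo: "f a - q (a - v) \<le> c" if "a \<in> S" for a
    unfolding c_def by (rule cSup_upper[OF _ bdd]) (use that X_def in auto)
  have c_hi: "c \<le> q (b + v) - f b" if "b \<in> S" for b
    unfolding c_def by (rule cSup_least[OF Xne]) (use that key X_def in auto)
  have dom: "f s + t * c \<le> q (s + t *\<^sub>R v)" if "s \<in> S" for s t
  proof (cases "t = 0")
    case True then show ?thesis using Sq that by simp
  next
    case False
    show ?thesis
    proof (cases "t > 0")
      case True
      define s' where "s' = (1 / t) *\<^sub>R s"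
      have s': "s' \<in> S" using Ssc that unfolding s'_def by auto
      have ts: "t *\<^sub>R s' = s" unfolding s'_def using True by simp
      have "t * c \<le> t * (q (s' + v) - f s')" using c_hi[OF s'] True by (simp add: mult_left_mono)
      also have "\<dots> = q (t *\<^sub>R (s' + v)) - f (t *\<^sub>R s')" using hom[OF True, of "s' + v"] Ssc[OF s'] by (simp add: algebra_simps)
      also have "\<dots> = q (s + t *\<^sub>R v) - f s" using ts by (simp add: scaleR_right_distrib)
      finally show ?thesis by simp
    next
      case False2: False
      define u where "u = - t"
      have u: "u > 0" using False False2 unfolding u_def by simp
      define s' where "s' = (1 / u) *\<^sub>R s"
      have s': "s' \<in> S" using Ssc that unfolding s'_def by auto
      have ts: "u *\<^sub>R s' = s" unfolding s'_def using u by simp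
      have "u * (f s' - q (s' - v)) \<le> u * c" using c_lo[OF s'] u by (simp add: mult_left_mono)
      moreover have "u * (f s' - q (s' - v)) = f (u *\<^sub>R s') - q (u *\<^sub>R (s' - v))"
        using hom[OF u, of "s' - v"] Ssc[OF s'] by (simp add: algebra_simps)
      moreover have "u *\<^sub>R (s' - v) = s + t *\<^sub>R v" using ts unfolding u_def by (simp add: scaleR_right_diff_distrib)
      ultimately show ?thesis using ts unfolding u_def by simp
    qed
  qed
  define S' where "S' = {s + t *\<^sub>R v |s t. s \<in> S}"
  have uniq: "s1 = s2 \<and> t1 = t2" if "s1 \<in> S" "s2 \<in> S" "s1 + t1 *\<^sub>R v = s2 + t2 *\<^sub>R v" for s1 s2 t1 t2
  proof -
    have d: "s2 - s1 \<in> S" using pext_minus[OF P that(2,1)] .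
    have e: "(t1 - t2) *\<^sub>R v = s2 - s1" using that(3) by (simp add: algebra_simps)
    have "t1 = t2"
    proof (rule ccontr)
      assume "t1 \<noteq> t2"
      then have "v = (1 / (t1 - t2)) *\<^sub>R ((t1 - t2) *\<^sub>R v)" by simp
      then have "v = (1 / (t1 - t2)) *\<^sub>R (s2 - s1)" using e by simp
      then show False using v Ssc[OF d] by metis
    qed
    then show ?thesis using that(3) by simp
  qed
  define g where "g x = (THE y. \<exists>s\<in>S. \<exists>t. x = s + t *\<^sub>R v \<and> y = f s + t * c)" for x
  have gS': "g (s + t *\<^sub>R v) = f s + t * c" if "s \<in> S" for s t
    unfolding g_def
  proof (rule the_equality)
    show "\<exists>s'\<in>S. \<exists>t'. s + t *\<^sub>R v = s' + t' *\<^sub>R v \<and> f s + t * c = f s' + t' * c" using that by blast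
    fix y assume "\<exists>s'\<in>S. \<exists>t'. s + t *\<^sub>R v = s' + t' *\<^sub>R v \<and> y = f s' + t' * c"
    then obtain s' t' where "s' \<in> S" "s + t *\<^sub>R v = s' + t' *\<^sub>R v" "y = f s' + t' * c" by blast
    then show "y = f s + t * c" using uniq[OF that \<open>s' \<in> S\<close>] by metis
  qed
  have "pext q S' g"
    unfolding pext_def
  proof (intro conjI ballI allI)
    show "0 \<in> S'" unfolding S'_def using S0 by (auto intro!: exI[of _ 0])
  next
    fix x y assume "x \<in> S'" "y \<in> S'"
    then obtain s1 t1 s2 t2 where h: "s1 \<in> S" "s2 \<in> S" "x = s1 + t1 *\<^sub>R v" "y = s2 + t2 *\<^sub>R v"
      unfolding S'_def by blast
    have xy: "x + y = (s1 + s2) + (t1 + t2) *\<^sub>R v" using h by (simp add: algebra_simps)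
    show "x + y \<in> S'" unfolding S'_def using xy Sadd[OF h(1,2)] by blast
    have "g (x + y) = f (s1 + s2) + (t1 + t2) * c" unfolding xy using gS' Sadd[OF h(1,2)] by blast
    then show "g (x + y) = g x + g y" using h gS' Sadd[OF h(1,2)] by (simp add: algebra_simps)
  next
    fix x a assume "x \<in> S'"
    then obtain s1 t1 where h: "s1 \<in> S" "x = s1 + t1 *\<^sub>R v" unfolding S'_def by blast
    have xy: "a *\<^sub>R x = (a *\<^sub>R s1) + (a * t1) *\<^sub>R v" using h by (simp add: algebra_simps)
    show "a *\<^sub>R x \<in> S'" unfolding S'_def using xy Ssc[OF h(1)] by blast
    have "g (a *\<^sub>R x) = f (a *\<^sub>R s1) + (a * t1) * c" unfolding xy using gS' Ssc[OF h(1)] by blast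
    then show "g (a *\<^sub>R x) = a * g x" using h gS' Ssc[OF h(1)] by (simp add: algebra_simps)
  next
    fix x assume "x \<in> S'"
    then obtain s1 t1 where h: "s1 \<in> S" "x = s1 + t1 *\<^sub>R v" unfolding S'_def by blast
    then show "g x \<le> q x" using gS' dom by simp
  qed
  moreover have "graph S f \<subset> graph S' g"
  proof
    show "graph S f \<subseteq> graph S' g"
    proof
      fix p assume "p \<in> graph S f"
      then obtain s where "s \<in> S" "p = (s, f s)" unfolding graph_def by blast
      moreover have "s = s + 0 *\<^sub>R v" by simp
      ultimately show "p \<in> graph S' g" unfolding graph_def S'_def using gS'[of s 0]
        by (simp add: image_iff) (metis add_0_right scaleR_zero_left)
    qed
    have "v \<in> S'" unfolding S'_def using S0 by (auto intro!: exI[of _ 0] exI[of _ 1])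
    then have "(v, g v) \<in> graph S' g" unfolding graph_def by blast
    moreover have "(v, g v) \<notin> graph S f" using v unfolding graph_def by blast
    ultimately show "graph S f \<noteq> graph S' g" by blast
  qed
  ultimately show ?thesis by blast
qed

theorem hahn_banach:
  fixes q :: "'v::real_vector \<Rightarrow> real"
  assumes q: "sublin q"
  shows "\<exists>L. linear L \<and> (\<forall>x. L x \<le> q x)"
proof -
  define A where "A = {graph S f |S f. pext q S f}"
  have p0: "pext q {0} (\<lambda>_. 0)" unfolding pext_def using sublin_0[OF q] by simp
  have "\<forall>C\<in>chains A. \<exists>U\<in>A. \<forall>X\<in>C. X \<subseteq> U"
  proof
    fix C assume C: "C \<in> chains A"
    show "\<exists>U\<in>A. \<forall>X\<in>C. X \<subseteq> U"
    proof (cases "C = {}")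
      case True then show ?thesis using p0 unfolding A_def by blast
    next
      case False
      then have "\<Union>C \<in> A" using chain_union[of C q] C unfolding A_def by blast
      then show ?thesis by blast
    qed
  qed
  from Zorn_Lemma2[OF this] obtain M where M: "M \<in> A" "\<forall>X\<in>A. M \<subseteq> X \<longrightarrow> X = M" by blast
  then obtain S f where Sf: "M = graph S f" "pext q S f" unfolding A_def by blast
  have "S = UNIV"
  proof (rule ccontr)
    assume "S \<noteq> UNIV"
    then obtain v where "v \<notin> S" by blast
    from one_step[OF q Sf(2) this] obtain S' g where "pext q S' g" "graph S f \<subset> graph S' g" by blast
    then show False using M Sf unfolding A_def by blast
  qed
  then have "linear f" using Sf(2) unfolding pext_def by (intro linearI) auto
  moreover have "\<forall>x. f x \<le> q x" using Sf(2) \<open>S = UNIV\<close> unfolding pext_def by auto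
  ultimately show ?thesis by blast
qed

lemma mazur_orlicz:
  fixes p :: "'v::real_vector \<Rightarrow> real"
  assumes p: "sublin p" and K: "convex K" "K \<noteq> {}" and b: "\<And>k. k \<in> K \<Longrightarrow> \<beta> \<le> p k"
  shows "\<exists>L. linear L \<and> (\<forall>x. L x \<le> p x) \<and> (\<forall>k\<in>K. \<beta> \<le> L k)"
proof -
  have add: "\<And>x y. p (x + y) \<le> p x + p y" and hom: "\<And>c x. c > 0 \<Longrightarrow> p (c *\<^sub>R x) = c * p x"
    using p unfolding sublin_def by auto
  have p0: "p 0 = 0" using sublin_0[OF p] .
  define T where "T v = {p (v + t *\<^sub>R k) - t * \<beta> |t k. t \<ge> 0 \<and> k \<in> K}" for v
  define q where "q v = Inf (T v)" for v
  obtain k0 where k0: "k0 \<in> K" using K(2) by blast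
  have Tmem: "p (v + t *\<^sub>R k) - t * \<beta> \<in> T v" if "t \<ge> 0" "k \<in> K" for v t k
    unfolding T_def using that by blast
  have Tcase: "\<exists>t k. t \<ge> 0 \<and> k \<in> K \<and> a = p (v + t *\<^sub>R k) - t * \<beta>" if "a \<in> T v" for a v
    using that unfolding T_def by auto
  have Tne: "T v \<noteq> {}" for v using Tmem[OF order_refl k0, of v] by blast
  have Tlow: "- p (- v) \<le> a" if ha: "a \<in> T v" for a v
  proof -
    obtain t k where tk: "t \<ge> 0" "k \<in> K" "a = p (v + t *\<^sub>R k) - t * \<beta>" using Tcase[OF ha] by blast
    have "t * \<beta> \<le> p (t *\<^sub>R k)"
    proof (cases "t = 0")
      case True then show ?thesis using p0 by simp
    next
      case False then have "t > 0" using tk by simp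
      then show ?thesis using hom[of t k] b[OF tk(2)] by (simp add: mult_left_mono)
    qed
    also have "p (t *\<^sub>R k) \<le> p (v + t *\<^sub>R k) + p (- v)" using add[of "v + t *\<^sub>R k" "- v"] by simp
    finally show ?thesis using tk by simp
  qed
  have Tbdd: "bdd_below (T v)" for v unfolding bdd_below_def by (rule exI[of _ "- p (- v)"]) (use Tlow in blast)
  have qle: "q v \<le> a" if "a \<in> T v" for a v unfolding q_def using that Tbdd by (rule cInf_lower)
  have qge: "c \<le> q v" if "\<And>a. a \<in> T v \<Longrightarrow> c \<le> a" for c v unfolding q_def using Tne that by (rule cInf_greatest)
  have q_le_p: "q v \<le> p v" for v
    using qle[OF Tmem[OF order_refl k0, of v]] by simp
  have q_add: "q (x + y) \<le> q x + q y" for x y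
  proof -
    have main: "q (x + y) \<le> a + b" if hab: "a \<in> T x" "b \<in> T y" for a b
    proof -
      obtain t1 k1 where 1: "t1 \<ge> 0" "k1 \<in> K" "a = p (x + t1 *\<^sub>R k1) - t1 * \<beta>" using Tcase[OF hab(1)] by blast
      obtain t2 k2 where 2: "t2 \<ge> 0" "k2 \<in> K" "b = p (y + t2 *\<^sub>R k2) - t2 * \<beta>" using Tcase[OF hab(2)] by blast
      show ?thesis
      proof (cases "t1 + t2 = 0")
        case True
        then have "t1 = 0" "t2 = 0" using 1 2 by auto
        have "q (x + y) \<le> p (x + y)" using qle[OF Tmem[OF order_refl 1(2), of "x+y"]] by simp
        also have "\<dots> \<le> a + b" using add[of x y] 1 2 \<open>t1 = 0\<close> \<open>t2 = 0\<close> by simp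
        finally show ?thesis .
      next
        case False
        then have tp: "t1 + t2 > 0" using 1 2 by simp
        define k where "k = (t1 / (t1 + t2)) *\<^sub>R k1 + (t2 / (t1 + t2)) *\<^sub>R k2"
        have kK: "k \<in> K" unfolding k_def
          using convexD[OF K(1) 1(2) 2(2), of "t1 / (t1 + t2)" "t2 / (t1 + t2)"] tp 1 2
          by (simp add: add_divide_distrib[symmetric])
        have tk: "(t1 + t2) *\<^sub>R k = t1 *\<^sub>R k1 + t2 *\<^sub>R k2" unfolding k_def using tp
          by (simp add: scaleR_add_right)
        have "q (x + y) \<le> p (x + y + (t1 + t2) *\<^sub>R k) - (t1 + t2) * \<beta>"
          by (rule qle[OF Tmem]) (use kK tp in auto)
        also have "x + y + (t1 + t2) *\<^sub>R k = (x + t1 *\<^sub>R k1) + (y + t2 *\<^sub>R k2)" using tk by (simp add: algebra_simps)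
        also have "p \<dots> \<le> p (x + t1 *\<^sub>R k1) + p (y + t2 *\<^sub>R k2)" by (rule add)
        finally show ?thesis using 1 2 by (simp add: algebra_simps)
      qed
    qed
    have "q (x + y) - b \<le> q x" if hb: "b \<in> T y" for b
    proof (rule qge)
      fix a assume "a \<in> T x" then show "q (x + y) - b \<le> a" using main[OF _ hb] by (simp add: algebra_simps)
    qed
    then have "q (x + y) - q x \<le> q y"
    proof (intro qge)
      fix b assume "b \<in> T y"
      from \<open>b \<in> T y \<Longrightarrow> q (x + y) - b \<le> q x\<close>[OF this] show "q (x + y) - q x \<le> b" by simp
    qed
    then show ?thesis by simp
  qed
  have q_hom1: "q (c *\<^sub>R x) \<le> c * q x" if c: "c > 0" for c x
  proof -
    have "q (c *\<^sub>R x) / c \<le> q x"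
    proof (rule qge)
      fix a assume "a \<in> T x"
      then obtain t k where tk: "t \<ge> 0" "k \<in> K" "a = p (x + t *\<^sub>R k) - t * \<beta>" using Tcase by blast
      have e: "c *\<^sub>R x + (c * t) *\<^sub>R k = c *\<^sub>R (x + t *\<^sub>R k)" by (simp add: algebra_simps)
      have "q (c *\<^sub>R x) \<le> p (c *\<^sub>R x + (c * t) *\<^sub>R k) - (c * t) * \<beta>"
        by (rule qle[OF Tmem]) (use tk c in auto)
      also have "\<dots> = c * a" unfolding e hom[OF c] tk(3) by (simp add: algebra_simps)
      finally show "q (c *\<^sub>R x) / c \<le> a" using c by (simp add: divide_le_eq mult.commute)
    qed
    then show ?thesis using c by (simp add: divide_le_eq mult.commute)
  qed
  have q_hom: "q (c *\<^sub>R x) = c * q x" if c: "c > 0" for c x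
  proof -
    have "q x = q ((1 / c) *\<^sub>R (c *\<^sub>R x))" using c by simp
    also have "\<dots> \<le> (1 / c) * q (c *\<^sub>R x)" using q_hom1[of "1 / c" "c *\<^sub>R x"] c by simp
    finally have "c * q x \<le> q (c *\<^sub>R x)" using c by (simp add: field_simps)
    then show ?thesis using q_hom1[OF c, of x] by linarith
  qed
  have "sublin q" unfolding sublin_def using q_add q_hom by blast
  from hahn_banach[OF this] obtain L where L: "linear L" "\<And>x. L x \<le> q x" by blast
  have "\<beta> \<le> L k" if "k \<in> K" for k
  proof -
    have "q (- k) \<le> p (- k + 1 *\<^sub>R k) - 1 * \<beta>" by (rule qle[OF Tmem]) (use that in auto)
    then have "q (- k) \<le> - \<beta>" using p0 by simp
    moreover have "L (- k) = - L k" using linear_neg[OF L(1)] .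
    ultimately show ?thesis using L(2)[of "- k"] by simp
  qed
  then show ?thesis using L q_le_p order_trans by blast
qed


lemma sublin_norm: "sublin (norm :: 'v::real_normed_vector \<Rightarrow> real)"
  unfolding sublin_def by (auto intro: norm_triangle_ineq)

lemma norm_nested: "norm (a, b) \<le> norm (a, (b, c))"
  unfolding norm_Pair using norm_fst_le[of b c] by (simp add: norm_Pair)

lemma decomp:
  fixes L :: "'a::real_normed_vector \<times> 'b::real_normed_vector \<times> real \<times> real \<Rightarrow> real"
  assumes L: "linear L" and bd: "\<And>v. L v \<le> norm v"
  shows "\<exists>(A::'a \<Rightarrow>\<^sub>L real) (G::'b \<Rightarrow>\<^sub>L real) \<beta> \<gamma>. \<forall>x y s t.
           L (x, y, s, t) = A x + G y + \<beta> * s + \<gamma> * t"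
proof -
  have absb: "\<bar>L v\<bar> \<le> norm v" for v
    using bd[of v] bd[of "- v"] linear_neg[OF L, of v] by simp
  define A where "A x = L (x, 0, 0, 0)" for x
  define G where "G y = L (0, y, 0, 0)" for y
  have lA: "linear A" unfolding A_def
  proof (intro linearI)
    show "L (b1 + b2, 0, 0, 0) = L (b1, 0, 0, 0) + L (b2, 0, 0, 0)" for b1 b2
      using linear_add[OF L, of "(b1, 0, 0, 0)" "(b2, 0, 0, 0)"] by simp
    show "L (r *\<^sub>R b, 0, 0, 0) = r *\<^sub>R L (b, 0, 0, 0)" for r b
      using linear_scale[OF L, of r "(b, 0, 0, 0)"] by simp
  qed
  have lG: "linear G" unfolding G_def
  proof (intro linearI)
    show "L (0, b1 + b2, 0, 0) = L (0, b1, 0, 0) + L (0, b2, 0, 0)" for b1 b2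
      using linear_add[OF L, of "(0, b1, 0, 0)" "(0, b2, 0, 0)"] by simp
    show "L (0, r *\<^sub>R b, 0, 0) = r *\<^sub>R L (0, b, 0, 0)" for r b
      using linear_scale[OF L, of r "(0, b, 0, 0)"] by simp
  qed
  have bA: "bounded_linear A"
  proof (rule bounded_linear_intro[where K=1])
    show "A (x + y) = A x + A y" "A (c *\<^sub>R x) = c *\<^sub>R A x" for x y c using lA by (simp_all add: linear_add linear_scale)
    show "norm (A x) \<le> norm x * 1" for x
      using absb[of "(x, 0, 0, 0)"] unfolding A_def by (simp add: norm_Pair)
  qed
  have bG: "bounded_linear G"
  proof (rule bounded_linear_intro[where K=1])
    show "G (x + y) = G x + G y" "G (c *\<^sub>R x) = c *\<^sub>R G x" for x y c using lG by (simp_all add: linear_add linear_scale)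
    show "norm (G x) \<le> norm x * 1" for x
      using absb[of "(0, x, 0, 0)"] unfolding G_def by (simp add: norm_Pair)
  qed
  have eq: "L (x, y, s, t) = A x + G y + L (0, 0, 1, 0) * s + L (0, 0, 0, 1) * t" for x y s t
  proof -
    have "(x, y, s, t) = (x, 0, 0, 0) + ((0, y, 0, 0) + (s *\<^sub>R (0, 0, 1, 0) + t *\<^sub>R (0, 0, 0, 1)))"
      by simp
    then have "L (x, y, s, t) = L (x, 0, 0, 0) + (L (0, y, 0, 0) + (s * L (0, 0, 1, 0) + t * L (0, 0, 0, 1)))"
      by (simp only: linear_add[OF L] linear_scale[OF L] real_scaleR_def)
    then show ?thesis unfolding A_def G_def by (simp add: algebra_simps)
  qed
  have "\<forall>x y s t. L (x, y, s, t) = blinfun_apply (Blinfun A) x + blinfun_apply (Blinfun G) y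
      + L (0, 0, 1, 0) * s + L (0, 0, 0, 1) * t"
    unfolding bounded_linear_Blinfun_apply[OF bA] bounded_linear_Blinfun_apply[OF bG] using eq by blast
  then show ?thesis by blast
qed

lemma norm_approx:
  fixes A :: "'a::real_normed_vector \<Rightarrow>\<^sub>L real"
  assumes "\<eta> > 0"
  shows "\<exists>u. norm u \<le> 1 \<and> norm A - \<eta> \<le> A u"
proof (rule ccontr)
  assume H: "\<not> ?thesis"
  then have h: "A u < norm A - \<eta>" if "norm u \<le> 1" for u using that by force
  have pos: "norm A - \<eta> \<ge> 0" using h[of 0] by simp
  have "norm A \<le> norm A - \<eta>"
  proof (rule norm_blinfun_bound[OF pos])
    fix x
    show "norm (A x) \<le> (norm A - \<eta>) * norm x"
    proof (cases "x = 0")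
      case True then show ?thesis by simp
    next
      case False
      define u where "u = (1 / norm x) *\<^sub>R x"
      have nu: "norm u \<le> 1" "norm (- u) \<le> 1" using False unfolding u_def by simp_all
      have "A u < norm A - \<eta>" "A (- u) < norm A - \<eta>" using h nu by blast+
      then have "\<bar>A u\<bar> \<le> norm A - \<eta>" by (simp add: blinfun.minus_right)
      moreover have "A x = norm x * A u" unfolding u_def using False by (simp add: blinfun.scaleR_right)
      ultimately show ?thesis by (simp add: abs_mult mult.commute mult_left_mono)
    qed
  qed
  then show False using assms by simp
qed

lemma epi_convex:
  fixes f :: "'v::real_vector \<Rightarrow> ereal"
  assumes "convex_fun f"
  shows "convex {(w, s). f w \<le> ereal s}"
proof (rule convexI)
  fix p1 p2 :: "'v \<times> real" and u v :: real
  assume p: "p1 \<in> {(w, s). f w \<le> ereal s}" "p2 \<in> {(w, s). f w \<le> ereal s}" and uv: "0 \<le> u" "0 \<le> v" "u + v = 1"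
  obtain w1 s1 w2 s2 where e: "p1 = (w1, s1)" "p2 = (w2, s2)" by (cases p1, cases p2)
  have f1: "f w1 \<le> ereal s1" and f2: "f w2 \<le> ereal s2" using p e by auto
  have u: "u = 1 - v" using uv by simp
  have "f (u *\<^sub>R w1 + v *\<^sub>R w2) \<le> ereal u * f w1 + ereal v * f w2"
    using assms uv unfolding convex_fun_def u by auto
  also have "\<dots> \<le> ereal u * ereal s1 + ereal v * ereal s2"
    by (intro add_mono ereal_mult_left_mono f1 f2) (use uv in auto)
  finally show "u *\<^sub>R p1 + v *\<^sub>R p2 \<in> {(w, s). f w \<le> ereal s}" using e by simp
qed

lemma conj_lower:
  "ereal (blinfun_apply u (fst p) + blinfun_apply v (snd p)) - F p \<le> fenchel_conj F (u, v)"
  unfolding fenchel_conj_def by (auto intro: SUP_upper)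

lemma key_conj:
  fixes f0 :: "'a::real_normed_vector \<times> ('a \<Rightarrow>\<^sub>L real) \<Rightarrow> ereal"
    and zss :: "('a \<Rightarrow>\<^sub>L real) \<Rightarrow>\<^sub>L real" and a :: "'a \<Rightarrow>\<^sub>L real"
    and g :: "('a \<Rightarrow>\<^sub>L real) \<Rightarrow>\<^sub>L real"
  assumes mino: "\<And>x xs. ereal (a x + g xs - K0) \<le> f0 (x, xs)" and pos: "zss a - K0 > 0"
  shows "fenchel_conj (fenchel_conj f0) (zss, 0) > 0"
proof -
  have "fenchel_conj f0 (a, g) \<le> ereal K0"
    unfolding fenchel_conj_def
  proof (simp, rule SUP_least)
    fix p :: "'a \<times> ('a \<Rightarrow>\<^sub>L real)"
    obtain x xs where p: "p = (x, xs)" by (cases p)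
    have m: "ereal (a x + g xs - K0) \<le> f0 p" using mino p by simp
    show "ereal (a (fst p) + g (snd p)) - f0 p \<le> ereal K0"
      using m p by (cases "f0 p") auto
  qed
  moreover have "ereal (zss a + blinfun_apply 0 g) - fenchel_conj f0 (a, g) \<le> fenchel_conj (fenchel_conj f0) (zss, 0)"
    using conj_lower[of zss "(a, g)" 0 "fenchel_conj f0"] by simp
  ultimately show ?thesis using pos
  proof (cases "fenchel_conj f0 (a, g)")
    case (real r)
    assume h: "fenchel_conj f0 (a, g) \<le> ereal K0"
      "ereal (zss a + blinfun_apply 0 g) - fenchel_conj f0 (a, g) \<le> fenchel_conj (fenchel_conj f0) (zss, 0)"
    have "(0::ereal) < ereal (zss a - r)" using h(1) real pos by simp
    also have "\<dots> \<le> fenchel_conj (fenchel_conj f0) (zss, 0)" using h(2) real by simp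
    finally show ?thesis .
  qed auto
qed

lemma minorant_exists:
  fixes f0 :: "'a::real_normed_vector \<times> ('a \<Rightarrow>\<^sub>L real) \<Rightarrow> ereal"
  assumes proper: "proper_fun f0" and convex: "convex_fun f0" and lsc: "lsc_fun f0"
  shows "\<exists>(a0::'a \<Rightarrow>\<^sub>L real) (g0::('a \<Rightarrow>\<^sub>L real) \<Rightarrow>\<^sub>L real) C0.
           \<forall>x xs. ereal (a0 x + g0 xs - C0) \<le> f0 (x, xs)"
proof -
  have ninf: "f0 w \<noteq> - \<infinity>" for w using proper unfolding proper_fun_def by blast
  obtain w0 where w0: "f0 w0 \<noteq> \<infinity>" using proper unfolding proper_fun_def by blast
  define r where "r = real_of_ereal (f0 w0)"
  have fr: "f0 w0 = ereal r" unfolding r_def using w0 ninf[of w0] by (cases "f0 w0") auto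
  define Cl where "Cl = {w. f0 w \<le> ereal (r - 1/2)}"
  have "closed Cl" using lsc unfolding lsc_fun_def Cl_def by blast
  moreover have "w0 \<in> - Cl" unfolding Cl_def using fr by simp
  ultimately obtain \<delta>1 where d1: "\<delta>1 > 0" "ball w0 \<delta>1 \<subseteq> - Cl"
    using open_contains_ball[of "- Cl"] by blast
  define \<delta> where "\<delta> = min \<delta>1 (1/2)"
  have dpos: "\<delta> > 0" using d1 unfolding \<delta>_def by simp
  obtain x0 xs0 where w0e: "w0 = (x0, xs0)" by (cases w0)
  define epi where "epi = {(w, s). f0 w \<le> ereal s}"
  define ell :: "('a \<times> ('a \<Rightarrow>\<^sub>L real)) \<times> real \<Rightarrow> 'a \<times> ('a \<Rightarrow>\<^sub>L real) \<times> real \<times> real"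
    where "ell = (\<lambda>(w, s). (fst w, snd w, s, 0))"
  have lin: "linear ell" unfolding ell_def by (intro linearI) (auto simp: case_prod_beta)
  define P where "P = (x0, xs0, r - 1, (0::real))"
  define K where "K = (\<lambda>v. v - P) ` (ell ` epi)"
  have cK: "convex K" unfolding K_def
    by (intro convex_translation_subtract convex_linear_image[OF lin]) (unfold epi_def, rule epi_convex[OF convex])
  have memK: "(x - x0, xs - xs0, s - (r - 1), 0) \<in> K" if "f0 (x, xs) \<le> ereal s" for x xs s
  proof -
    have "((x, xs), s) \<in> epi" using that unfolding epi_def by simp
    then have "ell ((x, xs), s) - P \<in> K" unfolding K_def by blast
    then show ?thesis unfolding ell_def P_def by simp
  qed
  have Kne: "K \<noteq> {}" using memK[of x0 xs0 r] fr w0e by auto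
  have Klow: "\<delta> \<le> norm k" if "k \<in> K" for k
  proof (rule ccontr)
    assume nk: "\<not> \<delta> \<le> norm k"
    from that obtain x xs s where h: "f0 (x, xs) \<le> ereal s" and k: "k = (x - x0, xs - xs0, s - (r - 1), 0)"
      unfolding K_def epi_def ell_def P_def by auto
    have "norm ((x, xs) - w0) = norm (x - x0, xs - xs0)" using w0e by simp
    also have "\<dots> \<le> norm k" unfolding k by (rule norm_nested)
    finally have "dist w0 (x, xs) < \<delta>1" using nk unfolding \<delta>_def by (simp add: dist_norm dist_commute norm_minus_commute)
    then have "(x, xs) \<in> ball w0 \<delta>1" by simp
    then have "f0 (x, xs) > ereal (r - 1/2)" using d1 unfolding Cl_def by auto
    moreover have "\<bar>s - (r - 1)\<bar> \<le> norm k"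
    proof -
      have "\<bar>s - (r - 1)\<bar> \<le> norm (s - (r - 1), (0::real))" using norm_fst_le[of "s - (r - 1)" "0::real"] by simp
      also have "\<dots> \<le> norm (xs - xs0, s - (r - 1), (0::real))" by (rule norm_snd_le)
      also have "\<dots> \<le> norm k" unfolding k by (rule norm_snd_le)
      finally show ?thesis .
    qed
    then have "s < r - 1/2" using nk unfolding \<delta>_def by simp
    ultimately show False using h by (meson ereal_less_eq(3) less_le_trans not_le order.strict_implies_order)
  qed
  obtain \<Lambda> where L: "linear \<Lambda>" "\<And>v. \<Lambda> v \<le> norm v" "\<And>k. k \<in> K \<Longrightarrow> \<delta> \<le> \<Lambda> k"
    using mazur_orlicz[OF sublin_norm cK Kne Klow] by blast
  obtain A G \<beta> \<gamma> where dec: "\<And>x y s t. \<Lambda> (x, y, s, t) = blinfun_apply A x + blinfun_apply G y + \<beta> * s + \<gamma> * t"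
    using decomp[OF L(1,2)] by blast
  have ineq: "\<delta> \<le> A (x - x0) + G (xs - xs0) + \<beta> * (s - (r - 1))" if "f0 (x, xs) \<le> ereal s" for x xs s
    using L(3)[OF memK[OF that]] dec by simp
  have "\<delta> \<le> \<beta>" using ineq[of x0 xs0 r] fr w0e by simp
  then have bpos: "\<beta> > 0" using dpos by simp
  define \<kappa> where "\<kappa> = \<delta> + A x0 + G xs0 + \<beta> * (r - 1)"
  have mino: "ereal ((- (1 / \<beta>) *\<^sub>R A) x + (- (1 / \<beta>) *\<^sub>R G) xs - (- \<kappa> / \<beta>)) \<le> f0 (x, xs)" for x xs
  proof (cases "f0 (x, xs)")
    case (real s)
    have "\<kappa> \<le> A x + G xs + \<beta> * s" using ineq[of x xs s] real unfolding \<kappa>_def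
      by (simp add: blinfun.diff_right algebra_simps)
    then have "- (A x + G xs) / \<beta> + \<kappa> / \<beta> \<le> s" using bpos by (simp add: field_simps)
    moreover have "(- (1 / \<beta>) *\<^sub>R A) x + (- (1 / \<beta>) *\<^sub>R G) xs - (- \<kappa> / \<beta>) = - (A x + G xs) / \<beta> + \<kappa> / \<beta>"
      by (simp add: blinfun.minus_left blinfun.scaleR_left diff_divide_distrib add_divide_distrib)
    ultimately show ?thesis using real by simp
  next
    case PInf then show ?thesis by simp
  next
    case MInf then show ?thesis using ninf by blast
  qed
  then show ?thesis by blast
qed


theorem lemma7p2:
  fixes f0 :: "'a::banach \<times> ('a \<Rightarrow>\<^sub>L real) \<Rightarrow> ereal"
    and zss :: "('a \<Rightarrow>\<^sub>L real) \<Rightarrow>\<^sub>L real"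
    and zs :: "'a \<Rightarrow>\<^sub>L real"
  assumes nonzero: "\<exists>x::'a. x \<noteq> 0"
    and proper: "proper_fun f0"
    and convex: "convex_fun f0"
    and lsc: "lsc_fun f0"
    and hz: "fenchel_conj (fenchel_conj f0) (zss, 0) \<le> 0"
  shows "\<forall>n::nat. n \<ge> 1 \<longrightarrow> (\<exists>x xs.
           f0 (x, xs) \<le> ereal (1 / real n ^ 2) \<and>
           norm x \<le> norm zss + 1 / real n ^ 2 \<and>
           norm xs \<le> 1 / real n ^ 2 \<and>
           \<bar>zs x - zss zs\<bar> \<le> 1 / real n ^ 2)"
proof (intro allI impI)
  fix n :: nat assume n: "n \<ge> 1"
  define \<epsilon> where "\<epsilon> = 1 / real n ^ 2"
  have epos: "\<epsilon> > 0" using n unfolding \<epsilon>_def by simp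
  define M where "M = norm zss"
  define c0 where "c0 = zss zs"
  have M0: "M \<ge> 0" unfolding M_def by simp
  show "\<exists>x xs. f0 (x, xs) \<le> ereal (1 / real n ^ 2) \<and> norm x \<le> norm zss + 1 / real n ^ 2 \<and>
           norm xs \<le> 1 / real n ^ 2 \<and> \<bar>zs x - zss zs\<bar> \<le> 1 / real n ^ 2"
  proof (rule ccontr)
    assume H0: "\<not> ?thesis"
    have H: "False" if "f0 (x, xs) \<le> ereal \<epsilon>" "norm x \<le> M + \<epsilon>" "norm xs \<le> \<epsilon>" "\<bar>zs x - c0\<bar> \<le> \<epsilon>" for x xs
      using H0 that unfolding \<epsilon>_def M_def c0_def by blast
    have ninf: "f0 w \<noteq> - \<infinity>" for w using proper unfolding proper_fun_def by blast
    obtain a0 g0 C0 where mino0: "\<And>x xs. ereal (blinfun_apply a0 x + blinfun_apply g0 xs - C0) \<le> f0 (x, xs)"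
      using minorant_exists[OF proper convex lsc] by blast
    define epi where "epi = {(w, s). f0 w \<le> ereal s}"
    define ell :: "('a \<times> ('a \<Rightarrow>\<^sub>L real)) \<times> real \<Rightarrow> 'a \<times> ('a \<Rightarrow>\<^sub>L real) \<times> real \<times> real"
      where "ell = (\<lambda>(w, s). (fst w, snd w, s, zs (fst w)))"
    have lin: "linear ell" unfolding ell_def
      by (intro linearI) (auto simp: case_prod_beta blinfun.bilinear_simps)
    define D where "D = ell ` epi"
    have cD: "convex D" unfolding D_def
      by (intro convex_linear_image[OF lin]) (unfold epi_def, rule epi_convex[OF convex])
    have lin2: "linear (\<lambda>y::'a. (y, 0::'a \<Rightarrow>\<^sub>L real, 0::real, 0::real))"
      by (intro linearI) auto
    define B where "B = (+) (0::'a, 0::'a \<Rightarrow>\<^sub>L real, 0::real, c0) ` ((\<lambda>y::'a. (y, 0::'a \<Rightarrow>\<^sub>L real, 0::real, 0::real)) ` cball 0 M)"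
    have cB: "convex B" unfolding B_def
      by (intro convex_translation convex_linear_image[OF lin2] convex_cball)
    define K where "K = (\<Union>d\<in>D. \<Union>b\<in>B. {d - b})"
    have cK: "convex K" unfolding K_def by (rule convex_differences[OF cD cB])
    have memK: "(x - y, xs, s, zs x - c0) \<in> K" if "f0 (x, xs) \<le> ereal s" "norm y \<le> M" for x xs s y
    proof -
      have "ell ((x, xs), s) \<in> D" unfolding D_def epi_def using that(1) by (intro imageI) simp
      moreover have "(y, 0, 0, c0) \<in> B" unfolding B_def using that(2)
        by (auto simp: image_iff intro!: bexI[of _ y])
      ultimately have "ell ((x, xs), s) - (y, 0, 0, c0) \<in> K" unfolding K_def by blast
      then show ?thesis unfolding ell_def by simp
    qed
    have Kcase: "\<exists>x xs s y. f0 (x, xs) \<le> ereal s \<and> norm y \<le> M \<and> k = (x - y, xs, s, zs x - c0)"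
      if hk: "k \<in> K" for k
    proof -
      obtain d b where db: "d \<in> D" "b \<in> B" "k = d - b" using hk unfolding K_def by blast
      obtain x xs s where d: "f0 (x, xs) \<le> ereal s" "d = (x, xs, s, zs x)"
        using db(1) unfolding D_def epi_def ell_def by auto
      obtain y where b: "norm y \<le> M" "b = (y, 0, 0, c0)" using db(2) unfolding B_def by auto
      show ?thesis using d b db(3) by auto
    qed
    obtain w1 where w1: "f0 w1 \<noteq> \<infinity>" using proper unfolding proper_fun_def by blast
    obtain x1 xs1 r1 where fr1: "f0 (x1, xs1) = ereal r1"
      using w1 ninf[of w1] by (cases w1, cases "f0 w1") auto
    have Kne: "K \<noteq> {}" using memK[of x1 xs1 r1 0] fr1 M0 by auto
    have Klow: "\<epsilon> \<le> norm k" if hk: "k \<in> K" for k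
    proof (rule ccontr)
      assume nk: "\<not> \<epsilon> \<le> norm k"
      obtain x xs s y where h: "f0 (x, xs) \<le> ereal s" "norm y \<le> M" "k = (x - y, xs, s, zs x - c0)"
        using Kcase[OF hk] by blast
      have n1: "norm (x - y) \<le> norm k" unfolding h(3) by (rule norm_fst_le)
      have n2: "norm (xs, s, zs x - c0) \<le> norm k" unfolding h(3) by (rule norm_snd_le)
      have n3: "norm xs \<le> norm k" using n2 norm_fst_le[of xs "(s, zs x - c0)"] by linarith
      have n4: "norm (s, zs x - c0) \<le> norm k" using n2 norm_snd_le[of "(s, zs x - c0)" xs] by linarith
      have n5: "\<bar>s\<bar> \<le> norm k" using n4 norm_fst_le[of s "zs x - c0"] by simp
      have n6: "\<bar>zs x - c0\<bar> \<le> norm k" using n4 norm_snd_le[of "zs x - c0" s] by simp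
      have "norm x \<le> norm y + norm (x - y)" using norm_triangle_ineq[of y "x - y"] by simp
      then have "norm x \<le> M + \<epsilon>" using n1 h(2) nk by linarith
      moreover have "f0 (x, xs) \<le> ereal \<epsilon>" using h(1) n5 nk order_trans by fastforce
      ultimately show False using H n3 n6 nk by fastforce
    qed
    obtain \<Lambda> where L: "linear \<Lambda>" "\<And>v. \<Lambda> v \<le> norm v" "\<And>k. k \<in> K \<Longrightarrow> \<epsilon> \<le> \<Lambda> k"
      using mazur_orlicz[OF sublin_norm cK Kne Klow] by blast
    obtain A G \<beta> \<gamma> where dec: "\<And>x y s t. \<Lambda> (x, y, s, t) = blinfun_apply A x + blinfun_apply G y + \<beta> * s + \<gamma> * t"
      using decomp[OF L(1,2)] by blast
    have ineq: "\<epsilon> \<le> A x - A y + G xs + \<beta> * s + \<gamma> * (zs x - c0)"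
      if "f0 (x, xs) \<le> ereal s" "norm y \<le> M" for x xs s y
      using L(3)[OF memK[OF that]] dec by (simp add: blinfun.bilinear_simps)
    have bnn: "\<beta> \<ge> 0"
    proof (rule ccontr)
      assume "\<not> \<beta> \<ge> 0"
      then have bneg: "\<beta> < 0" by simp
      define Q where "Q = A x1 + G xs1 + \<beta> * r1 + \<gamma> * (zs x1 - c0)"
      define N where "N = (\<bar>Q\<bar> + 1) / (- \<beta>)"
      have N0: "N \<ge> 0" unfolding N_def using bneg by (intro divide_nonneg_pos) auto
      have bN: "\<beta> * N = - (\<bar>Q\<bar> + 1)" unfolding N_def using bneg by (simp add: field_simps)
      have "f0 (x1, xs1) \<le> ereal (r1 + N)" using fr1 N0 by simp
      from ineq[OF this, of 0] M0 have "\<epsilon> \<le> Q + \<beta> * N" unfolding Q_def by (simp add: algebra_simps)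
      then show False using bN epos by linarith
    qed
    define \<eta> where "\<eta> = \<epsilon> / (2 * (M + 1))"
    have etapos: "\<eta> > 0" unfolding \<eta>_def using epos M0 by simp
    obtain u where u: "norm u \<le> 1" "norm A - \<eta> \<le> A u" using norm_approx[OF etapos] by blast
    define y where "y = M *\<^sub>R u"
    have ny: "norm y \<le> M" unfolding y_def using u(1) M0 by (simp add: mult_left_le)
    have zA: "zss A \<le> M * norm A" unfolding M_def using norm_blinfun[of zss A] by simp
    have Meta: "M * \<eta> \<le> \<epsilon> / 2" unfolding \<eta>_def using M0 epos by (simp add: field_simps)
    have Ay: "A y \<ge> zss A - \<epsilon> / 2"
    proof -
      have "A y = M * A u" unfolding y_def by (simp add: blinfun.bilinear_simps)
      moreover have "M * (norm A - \<eta>) \<le> M * A u" using u(2) M0 by (simp add: mult_left_mono)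
      ultimately show ?thesis using zA Meta by (simp add: algebra_simps)
    qed
    define \<kappa> where "\<kappa> = \<epsilon> + A y + \<gamma> * c0"
    have ineq2: "\<kappa> \<le> A x + G xs + \<beta> * s + \<gamma> * zs x" if "f0 (x, xs) \<le> ereal s" for x xs s
      using ineq[OF that ny] unfolding \<kappa>_def by (simp add: algebra_simps)
    define t where "t = max 0 (2 * (C0 - zss a0) / \<epsilon> + 1)"
    have t0: "t \<ge> 0" unfolding t_def by simp
    define Dn where "Dn = 1 + t * \<beta>"
    have Dpos: "Dn > 0" unfolding Dn_def using t0 bnn by (simp add: add_pos_nonneg)
    define a where "a = (1 / Dn) *\<^sub>R (a0 - t *\<^sub>R (A + \<gamma> *\<^sub>R zs))"
    define g where "g = (1 / Dn) *\<^sub>R (g0 - t *\<^sub>R G)"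
    define K0 where "K0 = (C0 - t * \<kappa>) / Dn"
    have aeq: "a x + g xs - K0 = ((a0 x + g0 xs - C0) - t * (A x + G xs + \<gamma> * zs x - \<kappa>)) / Dn" for x xs
      unfolding a_def g_def K0_def using Dpos by (simp add: blinfun.bilinear_simps field_simps)
    have mino: "ereal (a x + g xs - K0) \<le> f0 (x, xs)" for x xs
    proof (cases "f0 (x, xs)")
      case (real s)
      have m0: "a0 x + g0 xs - C0 \<le> s" using mino0[of x xs] real by simp
      have m1: "\<kappa> \<le> A x + G xs + \<beta> * s + \<gamma> * zs x" using ineq2[of x xs s] real by simp
      have "t * (\<kappa> - (A x + G xs + \<beta> * s + \<gamma> * zs x)) \<le> 0"
        using m1 t0 by (simp add: mult_nonneg_nonpos)
      then have "(a0 x + g0 xs - C0) - t * (A x + G xs + \<gamma> * zs x - \<kappa>) \<le> Dn * s"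
        using m0 unfolding Dn_def by (simp add: algebra_simps)
      then have "a x + g xs - K0 \<le> s" unfolding aeq using Dpos by (simp add: pos_divide_le_eq mult.commute)
      then show ?thesis using real by simp
    next
      case PInf then show ?thesis by simp
    next
      case MInf then show ?thesis using ninf by blast
    qed
    have zeq: "zss a - K0 = (zss a0 - C0 + t * (\<epsilon> + A y - zss A)) / Dn"
      unfolding a_def K0_def \<kappa>_def c0_def using Dpos by (simp add: blinfun.bilinear_simps field_simps)
    have "t * (\<epsilon> / 2) \<ge> C0 - zss a0 + \<epsilon> / 2"
    proof -
      have "t \<ge> 2 * (C0 - zss a0) / \<epsilon> + 1" unfolding t_def by simp
      then have "t * (\<epsilon> / 2) \<ge> (2 * (C0 - zss a0) / \<epsilon> + 1) * (\<epsilon> / 2)" using epos by (simp add: mult_right_mono)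
      also have "(2 * (C0 - zss a0) / \<epsilon> + 1) * (\<epsilon> / 2) = C0 - zss a0 + \<epsilon> / 2" using epos by (simp add: field_simps)
      finally show ?thesis .
    qed
    moreover have "t * (\<epsilon> + A y - zss A) \<ge> t * (\<epsilon> / 2)" using Ay t0 by (intro mult_left_mono) auto
    ultimately have "zss a0 - C0 + t * (\<epsilon> + A y - zss A) > 0" using epos by linarith
    then have "zss a - K0 > 0" unfolding zeq using Dpos by simp
    from key_conj[OF mino this] hz show False by simp
  qed
qed

end
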